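(* The free group of rank $2$ is not weakly homogeneous.
   Context: A group $H$ is weakly homogeneous if for every isomorphism $\varphi:A\to B$ between finitely generated subgroups $A,B$ of $H$ such that both $\varphi$ and $\varphi^{-1}:B\to A$ extend to endomorphisms of $H$, the map $\varphi$ extends to an automorphism of $H$. *)

theory Defs
  imports "HOL-Algebra.Algebra"
begin

text \<open>Letters: (g, s) where g :: bool names one of the two free generators and
  s = True marks the formal inverse of that generator.\<close>

type_synonym letter2 = "bool \<times> bool"

definition inv_letter :: "letter2 \<Rightarrow> letter2" where
  "inv_letter l = (fst l, \<not> snd l)"

fun reduced :: "letter2 list \<Rightarrow> bool" where
  "reduced [] = True"
| "reduced [l] = True"
| "reduced (l # m # ws) = (m \<noteq> inv_letter l \<and> reduced (m # ws))"

fun cons_red :: "letter2 \<Rightarrow> letter2 list \<Rightarrow> letter2 list" where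
  "cons_red l [] = [l]"
| "cons_red l (m # ws) = (if m = inv_letter l then ws else l # m # ws)"

definition reduce :: "letter2 list \<Rightarrow> letter2 list" where
  "reduce ws = foldr cons_red ws []"

definition free_group2 :: "letter2 list monoid" where
  "free_group2 = \<lparr> carrier = {w. reduced w},
                   monoid.mult = (\<lambda>x y. reduce (x @ y)),
                   one = [] \<rparr>"

definition fg_subgroup :: "('a, 'b) monoid_scheme \<Rightarrow> 'a set \<Rightarrow> bool" where
  "fg_subgroup G A \<longleftrightarrow> (\<exists>S. finite S \<and> S \<subseteq> carrier G \<and> A = generate G S)"

definition weakly_homogeneous :: "('a, 'b) monoid_scheme \<Rightarrow> bool" where
  "weakly_homogeneous G \<longleftrightarrow>
    (\<forall>A B \<phi>. fg_subgroup G A \<and> fg_subgroup G B \<and>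
       \<phi> \<in> iso (G\<lparr>carrier := A\<rparr>) (G\<lparr>carrier := B\<rparr>) \<and>
       (\<exists>f \<in> hom G G. \<forall>a\<in>A. f a = \<phi> a) \<and>
       (\<exists>g \<in> hom G G. \<forall>b\<in>B. g b = inv_into A \<phi> b)
       \<longrightarrow> (\<exists>h \<in> iso G G. \<forall>a\<in>A. h a = \<phi> a))"

end

theory Submission imports Defs begin

lemma inv_letter_inv[simp]: "inv_letter (inv_letter l) = l"
  by (simp add: inv_letter_def)

lemma inv_letter_neq[simp]: "inv_letter l \<noteq> l"
  by (cases l) (simp add: inv_letter_def)

lemma reduced_tl: "reduced (l # w) \<Longrightarrow> reduced w"
  by (cases w) auto

lemma cons_red_reduced: "reduced w \<Longrightarrow> reduced (cons_red l w)"
proof (cases w)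
  case (Cons m ws)
  assume "reduced w"
  then show ?thesis using Cons by (auto dest: reduced_tl)
qed simp

lemma reduced_reduce: "reduced (reduce w)"
  unfolding reduce_def by (induction w) (auto intro: cons_red_reduced)

lemma foldr_red: "reduced r \<Longrightarrow> reduced (foldr cons_red w r)"
  by (induction w) (auto intro: cons_red_reduced)

lemma reduce_reduced: "reduced w \<Longrightarrow> reduce w = w"
proof (induction w)
  case (Cons l w)
  then have "reduce w = w" by (auto dest: reduced_tl)
  then have "reduce (l # w) = cons_red l w" by (simp add: reduce_def)
  also have "\<dots> = l # w" using Cons.prems
    by (cases w) auto
  finally show ?case .
qed (simp add: reduce_def)

lemma cons_red_cancel: "reduced r \<Longrightarrow> cons_red (inv_letter l) (cons_red l r) = r"
proof (cases r)
  case Nil then show ?thesis by simp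
next
  case (Cons m ws)
  assume r: "reduced r"
  show ?thesis
  proof (cases "m = inv_letter l")
    case True
    then show ?thesis using Cons r by (cases ws) auto
  next
    case False
    then show ?thesis using Cons by simp
  qed
qed

lemma cons_red_cancel2: "reduced r \<Longrightarrow> cons_red l (cons_red (inv_letter l) r) = r"
  using cons_red_cancel[of r "inv_letter l"] by simp

lemma foldr_cons_red: "reduced v \<Longrightarrow> reduced r \<Longrightarrow>
  foldr cons_red (cons_red l v) r = cons_red l (foldr cons_red v r)"
proof (cases v)
  case (Cons m v')
  assume v: "reduced v" and r: "reduced r"
  show ?thesis
  proof (cases "m = inv_letter l")
    case True
    then show ?thesis using Cons cons_red_cancel2[OF foldr_red[OF r, of v'], of l] by simp
  qed (use Cons in simp)
qed simp

lemma foldr_reduce: "reduced r \<Longrightarrow> foldr cons_red (reduce w) r = foldr cons_red w r"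
proof (induction w)
  case (Cons l w)
  have "foldr cons_red (reduce (l # w)) r = foldr cons_red (cons_red l (reduce w)) r"
    by (simp add: reduce_def)
  also have "\<dots> = cons_red l (foldr cons_red (reduce w) r)"
    using foldr_cons_red[OF reduced_reduce Cons.prems] .
  finally show ?case using Cons by simp
qed (simp add: reduce_def)

lemma reduce_append: "reduce (x @ y) = foldr cons_red x (reduce y)"
  by (simp add: reduce_def)

lemma reduce_assoc: "reduce (reduce (x @ y) @ z) = reduce (x @ reduce (y @ z))"
proof -
  have "reduce (reduce (x @ y) @ z) = foldr cons_red (reduce (x @ y)) (reduce z)"
    by (simp only: reduce_append[of "reduce (x @ y)"])
  also have "\<dots> = foldr cons_red (x @ y) (reduce z)"
    by (rule foldr_reduce[OF reduced_reduce])
  also have "\<dots> = foldr cons_red x (reduce (y @ z))" by (simp add: reduce_append)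
  also have "\<dots> = reduce (x @ reduce (y @ z))"
    by (simp add: reduce_append reduce_reduced foldr_red reduced_reduce)
  finally show ?thesis .
qed

lemma foldr_rev_inv: "reduced r \<Longrightarrow>
   foldr cons_red (rev (map inv_letter w)) (foldr cons_red w r) = r"
proof (induction w)
  case (Cons l w)
  have "foldr cons_red (rev (map inv_letter (l # w))) (foldr cons_red (l # w) r)
     = foldr cons_red (rev (map inv_letter w)) (cons_red (inv_letter l) (cons_red l (foldr cons_red w r)))"
    by simp
  also have "\<dots> = foldr cons_red (rev (map inv_letter w)) (foldr cons_red w r)"
    using cons_red_cancel[OF foldr_red[OF Cons.prems]] by simp
  finally show ?case using Cons by simp
qed simp

lemma G_carrier[simp]: "carrier free_group2 = {w. reduced w}"
  by (simp add: free_group2_def)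
lemma G_mult[simp]: "x \<otimes>\<^bsub>free_group2\<^esub> y = reduce (x @ y)"
  by (simp add: free_group2_def)
lemma G_one[simp]: "\<one>\<^bsub>free_group2\<^esub> = []"
  by (simp add: free_group2_def)

lemma group_G: "group free_group2"
proof (rule groupI)
  fix x y z :: "letter2 list"
  show "(x \<otimes>\<^bsub>free_group2\<^esub> y) \<otimes>\<^bsub>free_group2\<^esub> z = x \<otimes>\<^bsub>free_group2\<^esub> (y \<otimes>\<^bsub>free_group2\<^esub> z)"
    by (simp add: reduce_assoc)
next
  fix x :: "letter2 list"
  assume x: "x \<in> carrier free_group2"
  show "\<exists>y\<in>carrier free_group2. y \<otimes>\<^bsub>free_group2\<^esub> x = \<one>\<^bsub>free_group2\<^esub>"
  proof (intro bexI)
    show "reduce (rev (map inv_letter x)) \<in> carrier free_group2"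
      by (simp add: reduced_reduce)
    have "reduce (reduce (rev (map inv_letter x)) @ x) = foldr cons_red (rev (map inv_letter x)) (foldr cons_red x [])"
      using x by (simp add: reduce_append foldr_reduce reduced_reduce reduce_reduced)
         (simp add: reduce_def[symmetric] reduce_reduced)
    then show "reduce (rev (map inv_letter x)) \<otimes>\<^bsub>free_group2\<^esub> x = \<one>\<^bsub>free_group2\<^esub>"
      using foldr_rev_inv[of "[]" x] by simp
  qed
qed (auto simp: reduced_reduce reduce_reduced)


definition lv :: "('g, 'z) monoid_scheme \<Rightarrow> 'g \<Rightarrow> 'g \<Rightarrow> letter2 \<Rightarrow> 'g" where
  "lv H u v l = (let g = (if fst l then u else v) in if snd l then inv\<^bsub>H\<^esub> g else g)"

definition ev :: "('g, 'z) monoid_scheme \<Rightarrow> 'g \<Rightarrow> 'g \<Rightarrow> letter2 list \<Rightarrow> 'g" where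
  "ev H u v w = foldr (\<lambda>l acc. lv H u v l \<otimes>\<^bsub>H\<^esub> acc) w \<one>\<^bsub>H\<^esub>"

lemma ev_Nil[simp]: "ev H u v [] = \<one>\<^bsub>H\<^esub>" by (simp add: ev_def)
lemma ev_Cons[simp]: "ev H u v (l # w) = lv H u v l \<otimes>\<^bsub>H\<^esub> ev H u v w" by (simp add: ev_def)

context group
begin

lemma lv_closed[simp]: "u \<in> carrier G \<Longrightarrow> v \<in> carrier G \<Longrightarrow> lv G u v l \<in> carrier G"
  by (simp add: lv_def Let_def)

lemma ev_closed[simp]: "u \<in> carrier G \<Longrightarrow> v \<in> carrier G \<Longrightarrow> ev G u v w \<in> carrier G"
  by (induction w) auto

lemma lv_inv: "u \<in> carrier G \<Longrightarrow> v \<in> carrier G \<Longrightarrow>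
   lv G u v l \<otimes> lv G u v (inv_letter l) = \<one>"
  by (cases l) (auto simp: lv_def inv_letter_def Let_def)

lemma ev_cons_red: assumes "u \<in> carrier G" "v \<in> carrier G"
  shows "ev G u v (cons_red l r) = lv G u v l \<otimes> ev G u v r"
proof (cases r)
  case (Cons m ws)
  show ?thesis
  proof (cases "m = inv_letter l")
    case True
    have "lv G u v l \<otimes> ev G u v r = (lv G u v l \<otimes> lv G u v m) \<otimes> ev G u v ws"
      using Cons assms by (simp add: m_assoc)
    also have "\<dots> = ev G u v ws" using True lv_inv assms by simp
    finally show ?thesis using Cons True by simp
  qed (use Cons in simp)
qed simp

lemma ev_reduce: assumes "u \<in> carrier G" "v \<in> carrier G"
  shows "ev G u v (reduce w) = ev G u v w"
proof (induction w)
  case (Cons l w)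
  then show ?case using ev_cons_red[OF assms] by (simp add: reduce_def)
qed (simp add: reduce_def)

lemma ev_append: assumes "u \<in> carrier G" "v \<in> carrier G"
  shows "ev G u v (x @ y) = ev G u v x \<otimes> ev G u v y"
  using assms by (induction x) (auto simp: m_assoc)

lemma ev_hom: assumes "u \<in> carrier G" "v \<in> carrier G"
  shows "ev G u v \<in> hom free_group2 G"
  by (rule homI) (use assms in \<open>auto simp: ev_reduce ev_append\<close>)

end

abbreviation "la \<equiv> [(True, False)]"
abbreviation "lb \<equiv> [(False, False)]"

lemma G_inv_letter: "inv\<^bsub>free_group2\<^esub> [(x, False)] = [(x, True)]"
  by (rule group.inv_equality[OF group_G]) (auto simp: reduce_def inv_letter_def)

lemma cons_eq_mult: "reduced (l # w) \<Longrightarrow> l # w = [l] \<otimes>\<^bsub>free_group2\<^esub> w"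
proof -
  assume a: "reduced (l # w)"
  then have "reduce w = w" by (simp add: reduce_reduced reduced_tl)
  then have "[l] \<otimes>\<^bsub>free_group2\<^esub> w = cons_red l w" by (simp add: reduce_def)
  also have "\<dots> = l # w" using a by (cases w) auto
  finally show ?thesis by simp
qed

lemma hom_unique:
  assumes H: "group H" and k: "k \<in> hom free_group2 H" and w: "reduced w"
  shows "k w = ev H (k la) (k lb) w"
  using w
proof (induction w)
  case Nil
  have "group_hom free_group2 H k"
    using H k group_G by (simp add: group_hom_def group_hom_axioms_def)
  then show ?case using group_hom.hom_one by fastforce
next
  case (Cons l w)
  have gh: "group_hom free_group2 H k"
    using H k group_G by (simp add: group_hom_def group_hom_axioms_def)
  have "k (l # w) = k [l] \<otimes>\<^bsub>H\<^esub> k w"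
    using cons_eq_mult[OF Cons.prems] k Cons.prems reduced_tl[OF Cons.prems]
    by (metis (no_types, lifting) G_carrier hom_mult mem_Collect_eq reduced.simps(2))
  moreover have "k [l] = lv H (k la) (k lb) l"
  proof (cases l)
    case (Pair x s)
    show ?thesis
    proof (cases s)
      case True
      have "k [(x, True)] = inv\<^bsub>H\<^esub> k [(x, False)]"
        using group_hom.hom_inv[OF gh, of "[(x, False)]"] by (simp add: G_inv_letter)
      then show ?thesis using Pair True by (cases x) (auto simp: lv_def)
    next
      case False
      then show ?thesis using Pair by (cases x) (auto simp: lv_def)
    qed
  qed
  ultimately show ?case using Cons reduced_tl[OF Cons.prems] by simp
qed


datatype s3 = Q0 | Q1 | Q2 | Q3 | Q4 | Q5

fun qm :: "s3 \<Rightarrow> s3 \<Rightarrow> s3" where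
  "qm Q0 Q0 = Q0"
| "qm Q0 Q1 = Q1"
| "qm Q0 Q2 = Q2"
| "qm Q0 Q3 = Q3"
| "qm Q0 Q4 = Q4"
| "qm Q0 Q5 = Q5"
| "qm Q1 Q0 = Q1"
| "qm Q1 Q1 = Q0"
| "qm Q1 Q2 = Q4"
| "qm Q1 Q3 = Q5"
| "qm Q1 Q4 = Q2"
| "qm Q1 Q5 = Q3"
| "qm Q2 Q0 = Q2"
| "qm Q2 Q1 = Q3"
| "qm Q2 Q2 = Q0"
| "qm Q2 Q3 = Q1"
| "qm Q2 Q4 = Q5"
| "qm Q2 Q5 = Q4"
| "qm Q3 Q0 = Q3"
| "qm Q3 Q1 = Q2"
| "qm Q3 Q2 = Q5"
| "qm Q3 Q3 = Q4"
| "qm Q3 Q4 = Q0"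
| "qm Q3 Q5 = Q1"
| "qm Q4 Q0 = Q4"
| "qm Q4 Q1 = Q5"
| "qm Q4 Q2 = Q1"
| "qm Q4 Q3 = Q0"
| "qm Q4 Q4 = Q3"
| "qm Q4 Q5 = Q2"
| "qm Q5 Q0 = Q5"
| "qm Q5 Q1 = Q4"
| "qm Q5 Q2 = Q3"
| "qm Q5 Q3 = Q2"
| "qm Q5 Q4 = Q1"
| "qm Q5 Q5 = Q0"

fun qinv :: "s3 \<Rightarrow> s3" where
  "qinv Q3 = Q4" | "qinv Q4 = Q3" | "qinv x = x"

definition QG :: "s3 monoid" where
  "QG = \<lparr> carrier = UNIV, monoid.mult = qm, one = Q0 \<rparr>"

lemma QG_simps[simp]: "carrier QG = UNIV" "x \<otimes>\<^bsub>QG\<^esub> y = qm x y" "\<one>\<^bsub>QG\<^esub> = Q0"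
  by (simp_all add: QG_def)

lemma group_QG: "group QG"
proof (rule groupI)
  fix x y z
  show "x \<otimes>\<^bsub>QG\<^esub> y \<otimes>\<^bsub>QG\<^esub> z = x \<otimes>\<^bsub>QG\<^esub> (y \<otimes>\<^bsub>QG\<^esub> z)"
    by (cases x; cases y; cases z) simp_all
next
  fix x
  show "\<exists>y\<in>carrier QG. y \<otimes>\<^bsub>QG\<^esub> x = \<one>\<^bsub>QG\<^esub>"
    by (rule bexI[of _ "qinv x"]) (cases x; simp_all)+
next
  fix x :: s3
  show "\<one>\<^bsub>QG\<^esub> \<otimes>\<^bsub>QG\<^esub> x = x" by (cases x) simp_all
qed simp_all

lemma QG_inv[simp]: "inv\<^bsub>QG\<^esub> x = qinv x"
  by (rule group.inv_equality[OF group_QG]) (cases x; simp_all)+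

definition yw :: "letter2 list" where
  "yw = [(True,False),(True,False),(False,False),(True,True),(False,False)]"

lemma fiber: "ev QG p q yw = Q3 \<Longrightarrow> (p, q) \<in> {(Q0,Q4),(Q3,Q0),(Q4,Q3)}"
  by (cases p; cases q) (simp_all add: yw_def lv_def)


lemma ev_la: "group H \<Longrightarrow> u \<in> carrier H \<Longrightarrow> v \<in> carrier H \<Longrightarrow> ev H u v la = u"
  by (simp add: lv_def group.is_monoid monoid.r_one)
lemma ev_lb: "group H \<Longrightarrow> u \<in> carrier H \<Longrightarrow> v \<in> carrier H \<Longrightarrow> ev H u v lb = v"
  by (simp add: lv_def group.is_monoid monoid.r_one)

lemma yw_red[simp]: "reduced yw" by (simp add: yw_def inv_letter_def)

lemma card3: "card {a, b, c :: 'x} \<le> 3"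
  by (simp add: card_insert_if)

lemma nonprim: assumes h: "h \<in> iso free_group2 free_group2" and hy: "h la = yw"
  shows False
proof -
  let ?G = free_group2
  have grp: "group ?G" by (rule group_G)
  have hh: "h \<in> hom ?G ?G" and bij: "bij_betw h (carrier ?G) (carrier ?G)"
    using h by (auto simp: iso_def)
  have la_c: "la \<in> carrier ?G" and lb_c: "lb \<in> carrier ?G" by auto
  obtain u where u: "u \<in> carrier ?G" "h u = la"
    using bij la_c by (metis bij_betw_iff_bijections)
  obtain v where v: "v \<in> carrier ?G" "h v = lb"
    using bij lb_c by (metis bij_betw_iff_bijections)
  let ?psi = "ev ?G u v"
  have psi: "?psi \<in> hom ?G ?G" using group.ev_hom[OF grp u(1) v(1)] .
  have psi_la: "?psi la = u" and psi_lb: "?psi lb = v"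
    using ev_la[OF grp u(1) v(1)] ev_lb[OF grp u(1) v(1)] by auto
  have hpsi: "h (?psi w) = w" if w: "reduced w" for w
  proof -
    have k: "h \<circ> ?psi \<in> hom ?G ?G" using hom_compose[OF psi hh] .
    have "(h \<circ> ?psi) w = ev ?G la lb w"
      using hom_unique[OF grp k w] psi_la psi_lb u v by simp
    moreover have "id w = ev ?G la lb w"
      using hom_unique[OF grp _ w, of id] by (simp add: hom_def)
    ultimately show ?thesis by simp
  qed
  have psih: "?psi (h x) = x" if x: "reduced x" for x
  proof -
    have hx: "h x \<in> carrier ?G" using hh x by (auto simp: hom_def)
    have "?psi (h x) \<in> carrier ?G" using psi hx by (auto simp: hom_def)
    moreover have "h (?psi (h x)) = h x" using hpsi hx by simp
    ultimately show ?thesis using bij x hx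
      by (metis G_carrier bij_betw_def inj_on_contraD mem_Collect_eq)
  qed
  let ?z = "h lb"
  have surj2: "\<exists>p q. ev QG p q yw = s \<and> ev QG p q ?z = t" for s t
  proof -
    let ?E = "ev QG s t"
    have E: "?E \<in> hom ?G QG" using group.ev_hom[OF group_QG] by simp
    have k: "?E \<circ> ?psi \<in> hom ?G QG" using hom_compose[OF psi E] .
    let ?p = "?E u" and ?q = "?E v"
    have eq: "?E (?psi w) = ev QG ?p ?q w" if w: "reduced w" for w
      using hom_unique[OF group_QG k w] psi_la psi_lb by simp
    have "ev QG ?p ?q yw = s"
      using eq[of "h la"] hy psih[of la] ev_la[OF group_QG, of s t] hh
      by (simp add: hom_def)
    moreover have "ev QG ?p ?q ?z = t"
    proof -
      have "reduced (h lb)" using hh lb_c by (auto simp: hom_def)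
      then show ?thesis
        using eq[of "h lb"] psih[of lb] ev_lb[OF group_QG, of s t] by simp
    qed
    ultimately show ?thesis by blast
  qed
  let ?S = "{ev QG Q0 Q4 ?z, ev QG Q3 Q0 ?z, ev QG Q4 Q3 ?z}"
  have "t \<in> ?S" for t
  proof -
    obtain p q where pq: "ev QG p q yw = Q3" "ev QG p q ?z = t" using surj2 by blast
    from fiber[OF pq(1)] pq(2) show ?thesis by auto
  qed
  then have "{Q0, Q1, Q2, Q3, Q4, Q5} \<subseteq> ?S" by blast
  then have "card {Q0, Q1, Q2, Q3, Q4, Q5} \<le> card ?S" by (intro card_mono) auto
  also have "\<dots> \<le> 3" by (rule card3)
  finally show False by simp
qed


theorem mainTheorem6:
  shows "\<not> weakly_homogeneous free_group2"
proof
  assume wh: "weakly_homogeneous free_group2"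
  let ?G = free_group2
  have grp: "group ?G" by (rule group_G)
  define A where "A = generate ?G {la}"
  define B where "B = generate ?G {yw}"
  define f where "f = ev ?G yw lb"
  define g where "g = ev ?G la []"
  have yc: "yw \<in> carrier ?G" by simp
  have f: "f \<in> hom ?G ?G" unfolding f_def by (rule group.ev_hom[OF grp]) auto
  have g: "g \<in> hom ?G ?G" unfolding g_def by (rule group.ev_hom[OF grp]) auto
  have fla: "f la = yw" unfolding f_def by (rule ev_la[OF grp]) auto
  have gy: "g yw = la"
    unfolding g_def yw_def
    by (simp add: lv_def G_inv_letter reduce_def inv_letter_def monoid.inv_one[OF group.is_monoid[OF grp], simplified])
  have fgh: "group_hom ?G ?G f"
    using f grp by (simp add: group_hom_def group_hom_axioms_def)
  have ggh: "group_hom ?G ?G (g \<circ> f)"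
    using hom_compose[OF f g] grp by (simp add: group_hom_def group_hom_axioms_def)
  have Ac: "A \<subseteq> carrier ?G" unfolding A_def using group.generate_in_carrier[OF grp, of "{la}"] by auto
  have gf: "x \<in> A \<Longrightarrow> g (f x) = x" for x
    unfolding A_def
  proof (induction x rule: generate.induct)
    case one
    then show ?case using group_hom.hom_one[OF ggh] by simp
  next
    case (incl h)
    then show ?case using fla gy by simp
  next
    case (inv h)
    then have "(g \<circ> f) (inv\<^bsub>?G\<^esub> h) = inv\<^bsub>?G\<^esub> ((g \<circ> f) h)"
      by (intro group_hom.hom_inv[OF ggh]) auto
    then show ?case using inv fla gy by simp
  next
    case (eng h1 h2)
    have "h1 \<in> carrier ?G" "h2 \<in> carrier ?G"
      using eng.hyps Ac unfolding A_def by auto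
    then have "(g \<circ> f) (h1 \<otimes>\<^bsub>?G\<^esub> h2) = (g \<circ> f) h1 \<otimes>\<^bsub>?G\<^esub> (g \<circ> f) h2"
      by (intro group_hom.hom_mult[OF ggh]) auto
    then show ?case using eng.IH by simp
  qed
  have img: "f ` A = B"
    unfolding A_def B_def using group_hom.generate_img[OF fgh, of "{la}"] fla by simp
  have inj: "inj_on f A" by (metis gf inj_on_inverseI)
  have Bc: "B \<subseteq> carrier ?G" unfolding B_def using group.generate_in_carrier[OF grp, of "{yw}"] yc by auto
  have iso: "f \<in> iso (?G\<lparr>carrier := A\<rparr>) (?G\<lparr>carrier := B\<rparr>)"
    unfolding iso_def
  proof (intro CollectI conjI)
    show "f \<in> hom (?G\<lparr>carrier := A\<rparr>) (?G\<lparr>carrier := B\<rparr>)"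
      using f img Ac by (auto simp: hom_def free_group2_def subset_iff)
    show "bij_betw f (carrier (?G\<lparr>carrier := A\<rparr>)) (carrier (?G\<lparr>carrier := B\<rparr>))"
      using inj img by (simp add: bij_betw_def)
  qed
  have ginv: "\<forall>b\<in>B. g b = inv_into A f b"
  proof
    fix b assume "b \<in> B"
    then obtain a where a: "a \<in> A" "b = f a" using img by auto
    then show "g b = inv_into A f b" using gf inj by simp
  qed
  have fgA: "fg_subgroup ?G A" unfolding A_def fg_subgroup_def by (intro exI[of _ "{la}"]) auto
  have fgB: "fg_subgroup ?G B" unfolding B_def fg_subgroup_def using yc by (intro exI[of _ "{yw}"]) auto
  have "\<exists>h \<in> iso ?G ?G. \<forall>a\<in>A. h a = f a"
    using wh fgA fgB iso f g ginv unfolding weakly_homogeneous_def by blast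
  then obtain h where h: "h \<in> iso ?G ?G" and ha: "\<forall>a\<in>A. h a = f a" by blast
  have "la \<in> A" unfolding A_def by (rule generate.incl) simp
  then have "h la = yw" using ha fla by simp
  then show False using nonprim h by blast
qed


end
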